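(* Let $H,\mathsf H$ be semigroups, $\mathfrak h\colon H\to\mathsf H$ a homomorphism, $X$ an $H$-set, $S$ an order-complete ordered $\mathsf H$-set with completion $\overline S$, and $f\colon X\to\overline S$. Then the lower envelopes $\mathrm{lE}^f_{\mathcal H}$, $\mathrm{lE}^f_{\overline{\mathcal H}}$, $\mathrm{lE}^f_{\mathcal H_{\le}}$ all belong to $\mathcal H_{\le}$, and the upper envelopes $\mathrm{uE}_f^{\mathcal H}$, $\mathrm{uE}_f^{\overline{\mathcal H}}$, $\mathrm{uE}_f^{\mathcal H_{\ge}}$ all belong to $\mathcal H_{\ge}$. If moreover $\mathsf H$ is a group, then $\mathrm{lE}^f_{\mathcal H}$, $\mathrm{lE}^f_{\overline{\mathcal H}}$, $\mathrm{uE}_f^{\mathcal H}$, $\mathrm{uE}_f^{\overline{\mathcal H}}$ all belong to $\overline{\mathcal H}$.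
   Context: $X$ is an $H$-set: an action $(h,x)\mapsto hx$ with $h_1(h_2x)=(h_1h_2)x$ (and $1x=x$ if $H$ has identity $1$); similarly $S$ is an $\mathsf H$-set, with a partial order $\leqslant$ such that $s_1\leqslant s_2\Rightarrow\mathsf h s_1\leqslant\mathsf h s_2$. $S$ is order-complete: every nonempty subset bounded below (above) in $S$ has an infimum (supremum) in $S$. The completion $\overline S$ adjoins a new least element $\inf S$ if $S$ has none and a new greatest element $\sup S$ if $S$ has none; the action is extended by $\mathsf h\cdot\inf S=\inf S$, $\mathsf h\cdot\sup S=\sup S$ for the adjoined symbols; in $\overline S$, $\sup\varnothing$ is the least and $\inf\varnothing$ the greatest element. Functions $X\to\overline S$ are ordered pointwise; $S$-valued functions are regarded as $\overline S$-valued. Classes: $\mathcal H$ = functions $\varphi\colon X\to S$ with $\varphi(hx)=\mathfrak h(h)\varphi(x)$ for all $h\in H,x\in X$; $\overline{\mathcal H}$ = functions $\varphi\colon X\to\overline S$ with the same identity; $\mathcal H_{\le}$ = functions $\varphi\colon X\to\overline S$ with $\varphi(hx)\leqslant\mathfrak h(h)\varphi(x)$ for all $h,x$; $\mathcal H_{\ge}$ = functions $\varphi\colon X\to\overline S$ with $\mathfrak h(h)\varphi(x)\leqslant\varphi(hx)$ for all $h,x$. For a class $\Phi$ of functions $X\to\overline S$: the lower $\Phi$-envelope is $\mathrm{lE}^f_\Phi(x)=\sup\{\varphi(x):\varphi\in\Phi,\ \varphi\leqslant f\text{ on }X\}$, and the upper $\Phi$-envelope is $\mathrm{uE}_f^\Phi(x)=\inf\{\varphi(x):\varphi\in\Phi,\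 f\leqslant\varphi\text{ on }X\}$, with sup/inf taken in $\overline S$. *)

theory Defs
  imports Main
begin

definition is_action :: "('h::semigroup_mult \<Rightarrow> 'x \<Rightarrow> 'x) \<Rightarrow> bool" where
  "is_action act \<longleftrightarrow>
     (\<forall>h1 h2 x. act h1 (act h2 x) = act (h1 * h2) x) \<and>
     (\<forall>e. (\<forall>h. e * h = h \<and> h * e = h) \<longrightarrow> (\<forall>x. act e x = x))"

definition sg_hom :: "('h::semigroup_mult \<Rightarrow> 'k::semigroup_mult) \<Rightarrow> bool" where
  "sg_hom hh \<longleftrightarrow> (\<forall>a b. hh (a * b) = hh a * hh b)"

definition sg_is_group :: "'k::semigroup_mult itself \<Rightarrow> bool" where
  "sg_is_group _ \<longleftrightarrow> (\<exists>e::'k. (\<forall>k. e * k = k \<and> k * e = k) \<and>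
                                (\<forall>k. \<exists>k'. k' * k = e \<and> k * k' = e))"

definition is_inf_in :: "'a::order set \<Rightarrow> 'a set \<Rightarrow> 'a \<Rightarrow> bool" where
  "is_inf_in U A i \<longleftrightarrow> i \<in> U \<and> (\<forall>a\<in>A. i \<le> a) \<and> (\<forall>y\<in>U. (\<forall>a\<in>A. y \<le> a) \<longrightarrow> y \<le> i)"

definition is_sup_in :: "'a::order set \<Rightarrow> 'a set \<Rightarrow> 'a \<Rightarrow> bool" where
  "is_sup_in U A s \<longleftrightarrow> s \<in> U \<and> (\<forall>a\<in>A. a \<le> s) \<and> (\<forall>y\<in>U. (\<forall>a\<in>A. a \<le> y) \<longrightarrow> s \<le> y)"

text \<open>S is the whole type 's.\<close>
definition order_complete :: "'s::order itself \<Rightarrow> bool" where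
  "order_complete _ \<longleftrightarrow>
     (\<forall>A::'s set. A \<noteq> {} \<and> (\<exists>b. \<forall>a\<in>A. b \<le> a) \<longrightarrow> (\<exists>i. is_inf_in UNIV A i)) \<and>
     (\<forall>A::'s set. A \<noteq> {} \<and> (\<exists>b. \<forall>a\<in>A. a \<le> b) \<longrightarrow> (\<exists>s. is_sup_in UNIV A s))"

definition mono_action :: "('k \<Rightarrow> 's::order \<Rightarrow> 's) \<Rightarrow> bool" where
  "mono_action act \<longleftrightarrow> (\<forall>k s1 s2. s1 \<le> s2 \<longrightarrow> act k s1 \<le> act k s2)"

datatype 's cext = Bot | Val 's | Top

instantiation cext :: (order) order
begin

fun less_eq_cext :: "'a cext \<Rightarrow> 'a cext \<Rightarrow> bool" where
  "less_eq_cext Bot _ = True"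
| "less_eq_cext (Val a) (Val b) = (a \<le> b)"
| "less_eq_cext (Val a) Top = True"
| "less_eq_cext (Val a) Bot = False"
| "less_eq_cext Top Top = True"
| "less_eq_cext Top _ = False"

definition less_cext :: "'a cext \<Rightarrow> 'a cext \<Rightarrow> bool" where
  "less_cext a b \<longleftrightarrow> a \<le> b \<and> \<not> b \<le> a"

instance
proof
  fix x y z :: "'a cext"
  show "(x < y) = (x \<le> y \<and> \<not> y \<le> x)" by (simp add: less_cext_def)
  show "x \<le> x" by (cases x) auto
  show "x \<le> y \<Longrightarrow> y \<le> z \<Longrightarrow> x \<le> z"
    by (cases x; cases y; cases z) auto
  show "x \<le> y \<Longrightarrow> y \<le> x \<Longrightarrow> x = y"
    by (cases x; cases y) auto
qed
end

definition Sbar :: "'s::order cext set" where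
  "Sbar = range Val
      \<union> (if (\<exists>m::'s. \<forall>s. m \<le> s) then {} else {Bot})
      \<union> (if (\<exists>M::'s. \<forall>s. s \<le> M) then {} else {Top})"

definition sup_bar :: "'s::order cext set \<Rightarrow> 's cext" where
  "sup_bar A = (THE s. is_sup_in Sbar A s)"

definition inf_bar :: "'s::order cext set \<Rightarrow> 's cext" where
  "inf_bar A = (THE i. is_inf_in Sbar A i)"

fun ext_act :: "('k \<Rightarrow> 's \<Rightarrow> 's) \<Rightarrow> 'k \<Rightarrow> 's cext \<Rightarrow> 's cext" where
  "ext_act act k Bot = Bot"
| "ext_act act k (Val s) = Val (act k s)"
| "ext_act act k Top = Top"

definition Hcls :: "('h \<Rightarrow> 'x \<Rightarrow> 'x) \<Rightarrow> ('k \<Rightarrow> 's::order \<Rightarrow> 's) \<Rightarrow> ('h \<Rightarrow> 'k)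
                     \<Rightarrow> ('x \<Rightarrow> 's cext) set" where
  "Hcls actX actS hh = {\<phi>. (\<forall>x. \<phi> x \<in> range Val) \<and>
      (\<forall>h x. \<phi> (actX h x) = ext_act actS (hh h) (\<phi> x))}"

definition Hbar :: "('h \<Rightarrow> 'x \<Rightarrow> 'x) \<Rightarrow> ('k \<Rightarrow> 's::order \<Rightarrow> 's) \<Rightarrow> ('h \<Rightarrow> 'k)
                     \<Rightarrow> ('x \<Rightarrow> 's cext) set" where
  "Hbar actX actS hh = {\<phi>. (\<forall>x. \<phi> x \<in> Sbar) \<and>
      (\<forall>h x. \<phi> (actX h x) = ext_act actS (hh h) (\<phi> x))}"

definition Hle :: "('h \<Rightarrow> 'x \<Rightarrow> 'x) \<Rightarrow> ('k \<Rightarrow> 's::order \<Rightarrow> 's) \<Rightarrow> ('h \<Rightarrow> 'k)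
                     \<Rightarrow> ('x \<Rightarrow> 's cext) set" where
  "Hle actX actS hh = {\<phi>. (\<forall>x. \<phi> x \<in> Sbar) \<and>
      (\<forall>h x. \<phi> (actX h x) \<le> ext_act actS (hh h) (\<phi> x))}"

definition Hge :: "('h \<Rightarrow> 'x \<Rightarrow> 'x) \<Rightarrow> ('k \<Rightarrow> 's::order \<Rightarrow> 's) \<Rightarrow> ('h \<Rightarrow> 'k)
                     \<Rightarrow> ('x \<Rightarrow> 's cext) set" where
  "Hge actX actS hh = {\<phi>. (\<forall>x. \<phi> x \<in> Sbar) \<and>
      (\<forall>h x. ext_act actS (hh h) (\<phi> x) \<le> \<phi> (actX h x))}"

definition lE :: "('x \<Rightarrow> 's::order cext) set \<Rightarrow> ('x \<Rightarrow> 's cext) \<Rightarrow> 'x \<Rightarrow> 's cext" where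
  "lE \<Phi> f x = sup_bar {\<phi> x | \<phi>. \<phi> \<in> \<Phi> \<and> (\<forall>y. \<phi> y \<le> f y)}"

definition uE :: "('x \<Rightarrow> 's::order cext) set \<Rightarrow> ('x \<Rightarrow> 's cext) \<Rightarrow> 'x \<Rightarrow> 's cext" where
  "uE \<Phi> f x = inf_bar {\<phi> x | \<phi>. \<phi> \<in> \<Phi> \<and> (\<forall>y. f y \<le> \<phi> y)}"

end

theory Submission
  imports Defs
begin

lemma Val_Sbar[simp]: "Val s \<in> Sbar"
  by (simp add: Sbar_def)

lemma le_Top[simp]: "(a::'s::order cext) \<le> Top"
  by (cases a) auto

lemma Bot_le[simp]: "Bot \<le> (a::'s::order cext)"
  by simp

lemma Top_le_iff[simp]: "Top \<le> (a::'s::order cext) \<longleftrightarrow> a = Top"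
  by (cases a) auto

lemma le_Bot_iff[simp]: "(a::'s::order cext) \<le> Bot \<longleftrightarrow> a = Bot"
  by (cases a) auto

lemma Bot_Sbar: "(Bot::'s::order cext) \<in> Sbar \<longleftrightarrow> \<not> (\<exists>m::'s. \<forall>s. m \<le> s)"
  by (auto simp add: Sbar_def)

lemma Top_Sbar: "(Top::'s::order cext) \<in> Sbar \<longleftrightarrow> \<not> (\<exists>M::'s. \<forall>s. s \<le> M)"
  by (auto simp add: Sbar_def)

lemma sup_ex:
  assumes oc: "order_complete TYPE('s::order)" and A: "A \<subseteq> (Sbar::'s cext set)"
  shows "\<exists>s. is_sup_in Sbar A s"
proof (cases "Top \<in> A")
  case True
  then show ?thesis using A by (intro exI[of _ Top]) (auto simp: is_sup_in_def)
next
  case nT: False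
  define V where "V = {s. Val s \<in> A}"
  show ?thesis
  proof (cases "V = {}")
    case True
    have AB: "A \<subseteq> {Bot}"
    proof
      fix a assume "a \<in> A" then show "a \<in> {Bot}" using nT True by (cases a) (auto simp: V_def)
    qed
    show ?thesis
    proof (cases "\<exists>m::'s. \<forall>s. m \<le> s")
      case True
      then obtain m :: 's where m: "\<forall>s. m \<le> s" by blast
      have "is_sup_in Sbar A (Val m)"
        unfolding is_sup_in_def
      proof (intro conjI ballI impI)
        fix a assume "a \<in> A" then show "a \<le> Val m" using AB by auto
      next
        fix y :: "'s cext" assume "y \<in> Sbar" then show "Val m \<le> y" using True m
          by (cases y) (auto simp: Bot_Sbar)
      qed simp
      then show ?thesis by blast
    next
      case False
      have "is_sup_in Sbar A Bot" using AB False by (auto simp: is_sup_in_def Bot_Sbar)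
      then show ?thesis by blast
    qed
  next
    case nE: False
    show ?thesis
    proof (cases "\<exists>b. \<forall>a\<in>V. a \<le> b")
      case True
      then obtain t where t: "is_sup_in UNIV V t" using oc nE unfolding order_complete_def by blast
      have "is_sup_in Sbar A (Val t)"
        unfolding is_sup_in_def
      proof (intro conjI ballI impI)
        fix a assume "a \<in> A" then show "a \<le> Val t" using t nT
          by (cases a) (auto simp: V_def is_sup_in_def)
      next
        fix y assume y: "y \<in> Sbar" "\<forall>a\<in>A. a \<le> y"
        then show "Val t \<le> y"
        proof (cases y)
          case Bot
          from nE obtain v where "v \<in> V" by blast
          then show ?thesis using y Bot by (force simp: V_def)
        next
          case (Val z)
          have "\<forall>a\<in>V. a \<le> z" using y Val by (force simp: V_def)
          then show ?thesis using t Val by (simp add: is_sup_in_def)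
        qed simp
      qed simp
      then show ?thesis by blast
    next
      case False
      then have TS: "(Top::'s cext) \<in> Sbar" unfolding Top_Sbar by blast
      have "is_sup_in Sbar A Top"
        unfolding is_sup_in_def
      proof (intro conjI ballI impI)
        fix y assume y: "y \<in> Sbar" "\<forall>a\<in>A. a \<le> y"
        show "Top \<le> y"
        proof (cases y)
          case Bot
          from nE obtain v where "v \<in> V" by blast
          then show ?thesis using y Bot by (force simp: V_def)
        next
          case (Val z)
          have "\<forall>a\<in>V. a \<le> z" using y Val by (force simp: V_def)
          then show ?thesis using False by blast
        qed simp
      qed (use TS in auto)
      then show ?thesis by blast
    qed
  qed
qed

lemma inf_ex:
  assumes oc: "order_complete TYPE('s::order)" and A: "A \<subseteq> (Sbar::'s cext set)"
  shows "\<exists>s. is_inf_in Sbar A s"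
proof (cases "Bot \<in> A")
  case True
  then show ?thesis using A by (intro exI[of _ Bot]) (auto simp: is_inf_in_def)
next
  case nT: False
  define V where "V = {s. Val s \<in> A}"
  show ?thesis
  proof (cases "V = {}")
    case True
    have AB: "A \<subseteq> {Top}"
    proof
      fix a assume "a \<in> A" then show "a \<in> {Top}" using nT True by (cases a) (auto simp: V_def)
    qed
    show ?thesis
    proof (cases "\<exists>m::'s. \<forall>s. s \<le> m")
      case True
      then obtain m :: 's where m: "\<forall>s. s \<le> m" by blast
      have "is_inf_in Sbar A (Val m)"
        unfolding is_inf_in_def
      proof (intro conjI ballI impI)
        fix a assume "a \<in> A" then show "Val m \<le> a" using AB by auto
      next
        fix y :: "'s cext" assume "y \<in> Sbar" then show "y \<le> Val m" using True m
          by (cases y) (auto simp: Top_Sbar)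
      qed simp
      then show ?thesis by blast
    next
      case False
      have "is_inf_in Sbar A Top" using AB False by (auto simp: is_inf_in_def Top_Sbar)
      then show ?thesis by blast
    qed
  next
    case nE: False
    show ?thesis
    proof (cases "\<exists>b. \<forall>a\<in>V. b \<le> a")
      case True
      then obtain t where t: "is_inf_in UNIV V t" using oc nE unfolding order_complete_def by blast
      have "is_inf_in Sbar A (Val t)"
        unfolding is_inf_in_def
      proof (intro conjI ballI impI)
        fix a assume "a \<in> A" then show "Val t \<le> a" using t nT
          by (cases a) (auto simp: V_def is_inf_in_def)
      next
        fix y assume y: "y \<in> Sbar" "\<forall>a\<in>A. y \<le> a"
        then show "y \<le> Val t"
        proof (cases y)
          case Top
          from nE obtain v where "v \<in> V" by blast
          then show ?thesis using y Top by (force simp: V_def)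
        next
          case (Val z)
          have "\<forall>a\<in>V. z \<le> a" using y Val by (force simp: V_def)
          then show ?thesis using t Val by (simp add: is_inf_in_def)
        qed simp
      qed simp
      then show ?thesis by blast
    next
      case False
      then have TS: "(Bot::'s cext) \<in> Sbar" unfolding Bot_Sbar by blast
      have "is_inf_in Sbar A Bot"
        unfolding is_inf_in_def
      proof (intro conjI ballI impI)
        fix y assume y: "y \<in> Sbar" "\<forall>a\<in>A. y \<le> a"
        show "y \<le> Bot"
        proof (cases y)
          case Top
          from nE obtain v where "v \<in> V" by blast
          then show ?thesis using y Top by (force simp: V_def)
        next
          case (Val z)
          have "\<forall>a\<in>V. z \<le> a" using y Val by (force simp: V_def)
          then show ?thesis using False by blast
        qed simp
      qed (use TS in auto)
      then show ?thesis by blast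
    qed
  qed
qed

lemma sup_bar_is:
  assumes "order_complete TYPE('s::order)" "A \<subseteq> (Sbar::'s cext set)"
  shows "is_sup_in Sbar A (sup_bar A)"
proof -
  obtain s where s: "is_sup_in Sbar A s" using sup_ex[OF assms] by blast
  have "\<And>t. is_sup_in Sbar A t \<Longrightarrow> t = s" using s
    unfolding is_sup_in_def by (meson order_antisym)
  then show ?thesis unfolding sup_bar_def using s by (metis theI)
qed

lemma inf_bar_is:
  assumes "order_complete TYPE('s::order)" "A \<subseteq> (Sbar::'s cext set)"
  shows "is_inf_in Sbar A (inf_bar A)"
proof -
  obtain s where s: "is_inf_in Sbar A s" using inf_ex[OF assms] by blast
  have "\<And>t. is_inf_in Sbar A t \<Longrightarrow> t = s" using s
    unfolding is_inf_in_def by (meson order_antisym)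
  then show ?thesis unfolding inf_bar_def using s by (metis theI)
qed

lemma ext_mono:
  assumes "mono_action actS" "a \<le> b"
  shows "ext_act actS k a \<le> ext_act actS k b"
  using assms by (cases a; cases b) (auto simp: mono_action_def)

lemma ext_Sbar: "a \<in> Sbar \<Longrightarrow> ext_act actS k a \<in> Sbar"
  by (cases a) auto

lemma lE_Hle:
  assumes oc: "order_complete TYPE('s::order)" and mo: "mono_action actS"
    and S: "\<forall>\<phi>\<in>\<Phi>. \<forall>x. \<phi> x \<in> Sbar"
    and L: "\<forall>\<phi>\<in>\<Phi>. \<forall>h x. \<phi> (actX h x) \<le> ext_act actS (hh h) (\<phi> x)"
  shows "lE (\<Phi> :: ('x \<Rightarrow> 's cext) set) f \<in> Hle actX actS hh"
proof -
  define A where "A y = {\<phi> y | \<phi>. \<phi> \<in> \<Phi> \<and> (\<forall>y. \<phi> y \<le> f y)}" for y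
  have sup: "is_sup_in Sbar (A y) (lE \<Phi> f y)" for y
    unfolding lE_def A_def[symmetric] by (rule sup_bar_is[OF oc]) (use S in \<open>auto simp: A_def\<close>)
  have "lE \<Phi> f (actX h x) \<le> ext_act actS (hh h) (lE \<Phi> f x)" for h x
  proof -
    have "\<forall>a\<in>A (actX h x). a \<le> ext_act actS (hh h) (lE \<Phi> f x)"
    proof
      fix a assume "a \<in> A (actX h x)"
      then obtain \<phi> where p: "\<phi> \<in> \<Phi>" "\<forall>y. \<phi> y \<le> f y" "a = \<phi> (actX h x)" by (auto simp: A_def)
      have "\<phi> x \<in> A x" using p by (auto simp: A_def)
      then have "\<phi> x \<le> lE \<Phi> f x" using sup[of x] by (simp add: is_sup_in_def)
      then have "ext_act actS (hh h) (\<phi> x) \<le> ext_act actS (hh h) (lE \<Phi> f x)" by (rule ext_mono[OF mo])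
      then show "a \<le> ext_act actS (hh h) (lE \<Phi> f x)" using L p order_trans by blast
    qed
    moreover have "ext_act actS (hh h) (lE \<Phi> f x) \<in> Sbar"
      using sup[of x] by (simp add: is_sup_in_def ext_Sbar)
    ultimately show ?thesis using sup[of "actX h x"] by (simp add: is_sup_in_def)
  qed
  then show ?thesis using sup by (auto simp: Hle_def is_sup_in_def)
qed

lemma uE_Hge:
  assumes oc: "order_complete TYPE('s::order)" and mo: "mono_action actS"
    and S: "\<forall>\<phi>\<in>\<Phi>. \<forall>x. \<phi> x \<in> Sbar"
    and L: "\<forall>\<phi>\<in>\<Phi>. \<forall>h x. ext_act actS (hh h) (\<phi> x) \<le> \<phi> (actX h x)"
  shows "uE (\<Phi> :: ('x \<Rightarrow> 's cext) set) f \<in> Hge actX actS hh"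
proof -
  define A where "A y = {\<phi> y | \<phi>. \<phi> \<in> \<Phi> \<and> (\<forall>y. f y \<le> \<phi> y)}" for y
  have inf: "is_inf_in Sbar (A y) (uE \<Phi> f y)" for y
    unfolding uE_def A_def[symmetric] by (rule inf_bar_is[OF oc]) (use S in \<open>auto simp: A_def\<close>)
  have "ext_act actS (hh h) (uE \<Phi> f x) \<le> uE \<Phi> f (actX h x)" for h x
  proof -
    have "\<forall>a\<in>A (actX h x). ext_act actS (hh h) (uE \<Phi> f x) \<le> a"
    proof
      fix a assume "a \<in> A (actX h x)"
      then obtain \<phi> where p: "\<phi> \<in> \<Phi>" "\<forall>y. f y \<le> \<phi> y" "a = \<phi> (actX h x)" by (auto simp: A_def)
      have "\<phi> x \<in> A x" using p by (auto simp: A_def)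
      then have "uE \<Phi> f x \<le> \<phi> x" using inf[of x] by (simp add: is_inf_in_def)
      then have "ext_act actS (hh h) (uE \<Phi> f x) \<le> ext_act actS (hh h) (\<phi> x)" by (rule ext_mono[OF mo])
      then show "ext_act actS (hh h) (uE \<Phi> f x) \<le> a" using L p order_trans by blast
    qed
    moreover have "ext_act actS (hh h) (uE \<Phi> f x) \<in> Sbar"
      using inf[of x] by (simp add: is_inf_in_def ext_Sbar)
    ultimately show ?thesis using inf[of "actX h x"] by (simp add: is_inf_in_def)
  qed
  then show ?thesis using inf by (auto simp: Hge_def is_inf_in_def)
qed

lemma ext_inv:
  assumes g: "sg_is_group TYPE('k::semigroup_mult)" and act: "is_action (actS :: 'k \<Rightarrow> 's \<Rightarrow> 's)"
  shows "\<exists>k'. \<forall>a. ext_act actS k' (ext_act actS k a) = a \<and> ext_act actS k (ext_act actS k' a) = a"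
proof -
  obtain e :: 'k where e: "\<forall>k. e * k = k \<and> k * e = k" and inv: "\<forall>k. \<exists>k'. k' * k = e \<and> k * k' = e"
    using g unfolding sg_is_group_def by blast
  obtain k' where k': "k' * k = e" "k * k' = e" using inv by blast
  have ide: "actS e s = s" for s using act e unfolding is_action_def by blast
  have c: "actS a (actS b s) = actS (a * b) s" for a b s using act unfolding is_action_def by blast
  have "ext_act actS k' (ext_act actS k a) = a \<and> ext_act actS k (ext_act actS k' a) = a" for a
    by (cases a) (auto simp: c k' ide)
  then show ?thesis by blast
qed

lemma sup_image:
  assumes inv: "\<forall>a. g' (g a) = a \<and> g (g' a) = a"
    and mg: "\<And>a b. a \<le> b \<Longrightarrow> g a \<le> g b" and mg': "\<And>a b. a \<le> b \<Longrightarrow> g' a \<le> g' b"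
    and Sg: "\<And>a. a \<in> Sbar \<Longrightarrow> g a \<in> Sbar" and Sg': "\<And>a. a \<in> Sbar \<Longrightarrow> g' a \<in> Sbar"
    and s: "is_sup_in (Sbar :: 's::order cext set) A s"
  shows "is_sup_in Sbar (g ` A) (g s)"
  unfolding is_sup_in_def
proof (intro conjI ballI impI)
  show "g s \<in> Sbar" using s Sg by (simp add: is_sup_in_def)
next
  fix b assume "b \<in> g ` A" then show "b \<le> g s" using s mg by (auto simp: is_sup_in_def)
next
  fix y assume y: "y \<in> Sbar" "\<forall>a\<in>g ` A. a \<le> y"
  have "\<forall>a\<in>A. a \<le> g' y" using y mg' inv by (metis image_eqI)
  then have "s \<le> g' y" using s Sg' y by (simp add: is_sup_in_def)
  then show "g s \<le> y" using mg inv by metis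
qed

lemma inf_image:
  assumes inv: "\<forall>a. g' (g a) = a \<and> g (g' a) = a"
    and mg: "\<And>a b. a \<le> b \<Longrightarrow> g a \<le> g b" and mg': "\<And>a b. a \<le> b \<Longrightarrow> g' a \<le> g' b"
    and Sg: "\<And>a. a \<in> Sbar \<Longrightarrow> g a \<in> Sbar" and Sg': "\<And>a. a \<in> Sbar \<Longrightarrow> g' a \<in> Sbar"
    and s: "is_inf_in (Sbar :: 's::order cext set) A s"
  shows "is_inf_in Sbar (g ` A) (g s)"
  unfolding is_inf_in_def
proof (intro conjI ballI impI)
  show "g s \<in> Sbar" using s Sg by (simp add: is_inf_in_def)
next
  fix b assume "b \<in> g ` A" then show "g s \<le> b" using s mg by (auto simp: is_inf_in_def)
next
  fix y assume y: "y \<in> Sbar" "\<forall>a\<in>g ` A. y \<le> a"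
  have "\<forall>a\<in>A. g' y \<le> a" using y mg' inv by (metis image_eqI)
  then have "g' y \<le> s" using s Sg' y by (simp add: is_inf_in_def)
  then show "y \<le> g s" using mg inv by metis
qed

lemma sup_uniq: "is_sup_in U A s \<Longrightarrow> is_sup_in U A t \<Longrightarrow> s = (t::'a::order)"
  unfolding is_sup_in_def by (meson order_antisym)

lemma inf_uniq: "is_inf_in U A s \<Longrightarrow> is_inf_in U A t \<Longrightarrow> s = (t::'a::order)"
  unfolding is_inf_in_def by (meson order_antisym)

lemma lE_Hbar:
  assumes oc: "order_complete TYPE('s::order)" and mo: "mono_action actS"
    and g: "sg_is_group TYPE('k::semigroup_mult)" and act: "is_action (actS :: 'k \<Rightarrow> 's \<Rightarrow> 's)"
    and S: "\<forall>\<phi>\<in>\<Phi>. \<forall>x. \<phi> x \<in> Sbar"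
    and L: "\<forall>\<phi>\<in>\<Phi>. \<forall>h x. \<phi> (actX h x) = ext_act actS (hh h) (\<phi> x)"
  shows "lE (\<Phi> :: ('x \<Rightarrow> 's cext) set) f \<in> Hbar actX actS hh
       \<and> uE \<Phi> f \<in> Hbar actX actS hh"
proof -
  define A where "A y = {\<phi> y | \<phi>. \<phi> \<in> \<Phi> \<and> (\<forall>y. \<phi> y \<le> f y)}" for y
  define B where "B y = {\<phi> y | \<phi>. \<phi> \<in> \<Phi> \<and> (\<forall>y. f y \<le> \<phi> y)}" for y
  have sup: "is_sup_in Sbar (A y) (lE \<Phi> f y)" for y
    unfolding lE_def A_def[symmetric] by (rule sup_bar_is[OF oc]) (use S in \<open>auto simp: A_def\<close>)
  have inf: "is_inf_in Sbar (B y) (uE \<Phi> f y)" for y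
    unfolding uE_def B_def[symmetric] by (rule inf_bar_is[OF oc]) (use S in \<open>auto simp: B_def\<close>)
  have eq: "lE \<Phi> f (actX h x) = ext_act actS (hh h) (lE \<Phi> f x) \<and>
            uE \<Phi> f (actX h x) = ext_act actS (hh h) (uE \<Phi> f x)" for h x
  proof -
    obtain k' where k': "\<forall>a. ext_act actS k' (ext_act actS (hh h) a) = a \<and> ext_act actS (hh h) (ext_act actS k' a) = a"
      using ext_inv[OF g act] by blast
    have A: "A (actX h x) = ext_act actS (hh h) ` A x" using L by (auto simp: A_def)
    have B: "B (actX h x) = ext_act actS (hh h) ` B x" using L by (auto simp: B_def)
    have s1: "is_sup_in Sbar (A (actX h x)) (ext_act actS (hh h) (lE \<Phi> f x))"
      unfolding A by (rule sup_image[OF k' ext_mono[OF mo] ext_mono[OF mo] ext_Sbar ext_Sbar sup])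
    have s2: "is_inf_in Sbar (B (actX h x)) (ext_act actS (hh h) (uE \<Phi> f x))"
      unfolding B by (rule inf_image[OF k' ext_mono[OF mo] ext_mono[OF mo] ext_Sbar ext_Sbar inf])
    show ?thesis using sup_uniq[OF sup s1] inf_uniq[OF inf s2] by simp
  qed
  show ?thesis using eq sup inf by (auto simp: Hbar_def is_sup_in_def is_inf_in_def)
qed

theorem corollary1:
  fixes actX :: "'h::semigroup_mult \<Rightarrow> 'x \<Rightarrow> 'x"
    and actS :: "'k::semigroup_mult \<Rightarrow> 's::order \<Rightarrow> 's"
    and hh :: "'h \<Rightarrow> 'k"
    and f :: "'x \<Rightarrow> 's cext"
  assumes "sg_hom hh"
    and "is_action actX"
    and "is_action actS"
    and "mono_action actS"
    and "order_complete TYPE('s)"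
    and "\<forall>x. f x \<in> Sbar"
  shows "lE (Hcls actX actS hh) f \<in> Hle actX actS hh
       \<and> lE (Hbar actX actS hh) f \<in> Hle actX actS hh
       \<and> lE (Hle actX actS hh) f \<in> Hle actX actS hh
       \<and> uE (Hcls actX actS hh) f \<in> Hge actX actS hh
       \<and> uE (Hbar actX actS hh) f \<in> Hge actX actS hh
       \<and> uE (Hge actX actS hh) f \<in> Hge actX actS hh
       \<and> (sg_is_group TYPE('k) \<longrightarrow>
            lE (Hcls actX actS hh) f \<in> Hbar actX actS hh
          \<and> lE (Hbar actX actS hh) f \<in> Hbar actX actS hh
          \<and> uE (Hcls actX actS hh) f \<in> Hbar actX actS hh
          \<and> uE (Hbar actX actS hh) f \<in> Hbar actX actS hh)"
proof -
  have cS: "\<forall>\<phi>\<in>Hcls actX actS hh. \<forall>x. \<phi> x \<in> Sbar" by (auto simp: Hcls_def) (metis Val_Sbar rangeE)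
  have cE: "\<forall>\<phi>\<in>Hcls actX actS hh. \<forall>h x. \<phi> (actX h x) = ext_act actS (hh h) (\<phi> x)" by (auto simp: Hcls_def)
  have bS: "\<forall>\<phi>\<in>Hbar actX actS hh. \<forall>x. \<phi> x \<in> Sbar" by (auto simp: Hbar_def)
  have bE: "\<forall>\<phi>\<in>Hbar actX actS hh. \<forall>h x. \<phi> (actX h x) = ext_act actS (hh h) (\<phi> x)" by (auto simp: Hbar_def)
  have lS: "\<forall>\<phi>\<in>Hle actX actS hh. \<forall>x. \<phi> x \<in> Sbar" by (auto simp: Hle_def)
  have lL: "\<forall>\<phi>\<in>Hle actX actS hh. \<forall>h x. \<phi> (actX h x) \<le> ext_act actS (hh h) (\<phi> x)" by (auto simp: Hle_def)
  have gS: "\<forall>\<phi>\<in>Hge actX actS hh. \<forall>x. \<phi> x \<in> Sbar" by (auto simp: Hge_def)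
  have gL: "\<forall>\<phi>\<in>Hge actX actS hh. \<forall>h x. ext_act actS (hh h) (\<phi> x) \<le> \<phi> (actX h x)" by (auto simp: Hge_def)
  have cL: "\<forall>\<phi>\<in>Hcls actX actS hh. \<forall>h x. \<phi> (actX h x) \<le> ext_act actS (hh h) (\<phi> x)"
    "\<forall>\<phi>\<in>Hcls actX actS hh. \<forall>h x. ext_act actS (hh h) (\<phi> x) \<le> \<phi> (actX h x)"
    using cE by auto
  have bL: "\<forall>\<phi>\<in>Hbar actX actS hh. \<forall>h x. \<phi> (actX h x) \<le> ext_act actS (hh h) (\<phi> x)"
    "\<forall>\<phi>\<in>Hbar actX actS hh. \<forall>h x. ext_act actS (hh h) (\<phi> x) \<le> \<phi> (actX h x)"
    using bE by auto
  show ?thesis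
    using lE_Hle[OF assms(5,4) cS cL(1)] lE_Hle[OF assms(5,4) bS bL(1)] lE_Hle[OF assms(5,4) lS lL]
      uE_Hge[OF assms(5,4) cS cL(2)] uE_Hge[OF assms(5,4) bS bL(2)] uE_Hge[OF assms(5,4) gS gL]
      lE_Hbar[OF assms(5,4) _ assms(3) cS cE] lE_Hbar[OF assms(5,4) _ assms(3) bS bE]
      cE bE by auto
qed

end
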